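(* Let $\mathbb D=\{z\in\mathbb C:|z|<1\}$ and let $\mathcal P$ be the set of holomorphic functions $p$ on $\mathbb D$ with $\operatorname{Re} p(z)>0$ for all $z\in\mathbb D$ (no normalization $p(0)=1$ is imposed). For $p\in\mathcal P$ and $0<r<1$ set \[ I_p(r):=\int_0^{2\pi}\left|\frac{z p'(z)}{p(z)}\right|^2\,d\theta,\qquad z=re^{i\theta}. \] Then for every $p\in\mathcal P$ and every $0<r<1$, \[ I_p(r)\le \frac{\pi^3 e^{-2}}{(1-r)^2}. \] Moreover, for each fixed $p\in\mathcal P$, $I_p(r)=o\bigl((1-r)^{-2}\bigr)$ as $r\to1^-$. *)

theory Defs
  imports "HOL-Complex_Analysis.Complex_Analysis" "HOL-Library.Landau_Symbols"
begin

definition caratheodory_class :: "(complex \<Rightarrow> complex) set" where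
  "caratheodory_class = {p. p holomorphic_on ball 0 1 \<and> (\<forall>z\<in>ball 0 1. Re (p z) > 0)}"

definition I_p :: "(complex \<Rightarrow> complex) \<Rightarrow> real \<Rightarrow> real" where
  "I_p p r = integral {0..2*pi}
     (\<lambda>\<theta>. (cmod (let z = of_real r * exp (\<i> * of_real \<theta>) in z * deriv p z / p z))\<^sup>2)"

end

theory Submission imports Defs begin

lemma exp_int_has_integral:
  fixes k :: int
  shows "((\<lambda>t. exp (\<i> * of_int k * of_real t)) has_integral (if k = 0 then of_real (2*pi) else 0)) {0..2*pi}"
proof (cases "k = 0")
  case True
  then show ?thesis using has_integral_const_real[of "1::complex" 0 "2*pi"] by (simp add: scaleR_conv_of_real)
next
  case False
  define F where "F = (\<lambda>z::complex. exp (\<i> * of_int k * z) / (\<i> * of_int k))"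
  have d: "(F has_field_derivative exp (\<i> * of_int k * z)) (at z)" for z
    unfolding F_def using False
    by (auto intro!: derivative_eq_intros simp: field_simps)
  have "((\<lambda>t. exp (\<i> * of_int k * of_real t)) has_integral (F (of_real (2*pi)) - F (of_real 0))) {0..2*pi}"
    by (rule fundamental_theorem_of_calculus) (auto intro!: has_vector_derivative_real_field d)
  moreover have "F (of_real (2*pi)) - F (of_real 0) = 0"
  proof -
    have "exp (\<i> * of_int k * of_real (2*pi)) = exp (complex_of_real (2 * real_of_int k * pi) * \<i>)"
      by (simp add: mult_ac)
    also have "\<dots> = 1" by (rule exp_integer_2pi) simp
    finally show ?thesis by (simp add: F_def)
  qed
  ultimately show ?thesis using False by simp
qed

lemma orth:
  fixes n m :: nat
  shows "((\<lambda>t. exp (\<i> * of_real t) ^ n * cnj (exp (\<i> * of_real t)) ^ m) has_integral (if n = m then of_real (2*pi) else 0)) {0..2*pi}"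
proof -
  have eq: "exp (\<i> * of_real t) ^ n * cnj (exp (\<i> * of_real t)) ^ m = exp (\<i> * of_int (int n - int m) * of_real t)" for t
  proof -
    have "exp (\<i> * of_real t) ^ n = exp (of_nat n * (\<i> * of_real t))" by (simp add: exp_of_nat_mult)
    moreover have "cnj (exp (\<i> * of_real t)) ^ m = exp (of_nat m * (- \<i> * of_real t))"
      using exp_of_nat_mult[of m "- (\<i> * of_real t)"] by (simp add: exp_cnj)
    ultimately show ?thesis by (simp add: exp_add[symmetric] algebra_simps)
  qed
  show ?thesis using exp_int_has_integral[of "int n - int m"] by (simp add: eq)
qed

lemma cnj_sq: "c * cnj c = (complex_of_real (cmod c))\<^sup>2"
  by (metis complex_norm_square of_real_power)

definition E :: "real \<Rightarrow> complex" where "E t = exp (\<i> * of_real t)"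

lemma finite_parseval:
  fixes c :: "nat \<Rightarrow> complex"
  shows "((\<lambda>t. (cmod (\<Sum>n<N. c n * E t ^ n))\<^sup>2) has_integral (2*pi * (\<Sum>n<N. (cmod (c n))\<^sup>2))) {0..2*pi}"
proof -
  have eq: "(\<Sum>n<N. c n * E t ^ n) * cnj (\<Sum>n<N. c n * E t ^ n)
      = (\<Sum>n<N. \<Sum>m<N. c n * cnj (c m) * (E t ^ n * cnj (E t) ^ m))" for t
    by (simp add: sum_product cnj_sum mult_ac)
  have "((\<lambda>t. \<Sum>n<N. \<Sum>m<N. c n * cnj (c m) * (E t ^ n * cnj (E t) ^ m)) has_integral
        (\<Sum>n<N. \<Sum>m<N. c n * cnj (c m) * (if n = m then of_real (2*pi) else 0))) {0..2*pi}"
    unfolding E_def by (intro has_integral_sum finite_lessThan has_integral_mult_right orth)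
  also have "(\<Sum>n<N. \<Sum>m<N. c n * cnj (c m) * (if n = m then of_real (2*pi) else 0))
       = (\<Sum>n<N. of_real (2*pi * (cmod (c n))\<^sup>2))"
    by (intro sum.cong refl) (simp add: if_distrib sum.delta cnj_sq mult_ac cong: if_cong)
  finally have "((\<lambda>t. (\<Sum>n<N. c n * E t ^ n) * cnj (\<Sum>n<N. c n * E t ^ n)) has_integral
      (\<Sum>n<N. of_real (2*pi * (cmod (c n))\<^sup>2))) {0..2*pi}"
    by (simp only: eq)
  from has_integral_Re[OF this] have "((\<lambda>t. (cmod (\<Sum>n<N. c n * E t ^ n))\<^sup>2) has_integral (\<Sum>n<N. 2*pi*(cmod (c n))\<^sup>2)) {0..2*pi}"
    by (simp only: cnj_sq Re_sum Re_complex_of_real flip: of_real_power)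
  then show ?thesis by (simp add: sum_distrib_left)
qed

lemma finite_parseval2:
  fixes c :: "nat \<Rightarrow> complex"
  assumes "N > 0"
  shows "((\<lambda>t. Re ((\<Sum>n<N. c n * E t ^ n)\<^sup>2)) has_integral (2*pi * Re ((c 0)\<^sup>2))) {0..2*pi}"
proof -
  have eq: "(\<Sum>n<N. c n * E t ^ n)\<^sup>2
      = (\<Sum>n<N. \<Sum>m<N. c n * c m * (E t ^ (n+m) * cnj (E t) ^ 0))" for t
    by (simp add: power2_eq_square sum_product power_add mult_ac)
  have "((\<lambda>t. \<Sum>n<N. \<Sum>m<N. c n * c m * (E t ^ (n+m) * cnj (E t) ^ 0)) has_integral
        (\<Sum>n<N. \<Sum>m<N. c n * c m * (if n + m = 0 then of_real (2*pi) else 0))) {0..2*pi}"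
    unfolding E_def by (intro has_integral_sum finite_lessThan has_integral_mult_right orth)
  also have "(\<Sum>n<N. \<Sum>m<N. c n * c m * (if n + m = 0 then of_real (2*pi) else 0))
       = (\<Sum>n<N. \<Sum>m<N. if n = 0 then (if m = 0 then c 0 * c 0 * of_real (2*pi) else 0) else 0)"
    by (intro sum.cong refl) auto
  also have "\<dots> = (\<Sum>n<N. if n = 0 then c 0 * c 0 * of_real (2*pi) else 0)"
    by (intro sum.cong refl) (auto simp: sum.delta)
  also have "\<dots> = c 0 * c 0 * of_real (2*pi)"
    using assms by (simp add: sum.delta)
  finally have "((\<lambda>t. (\<Sum>n<N. c n * E t ^ n)\<^sup>2) has_integral c 0 * c 0 * of_real (2*pi)) {0..2*pi}"
    by (simp only: eq)
  from has_integral_Re[OF this] show ?thesis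
    by (simp add: power2_eq_square mult_ac)
qed

lemma norm_E [simp]: "norm (E t) = 1"
  unfolding E_def by (simp add: norm_exp_i_times)

lemma parseval:
  fixes c :: "nat \<Rightarrow> complex" and g :: "real \<Rightarrow> complex"
  assumes sn: "summable (\<lambda>n. norm (c n))"
    and sg: "\<And>t. t \<in> {0..2*pi} \<Longrightarrow> (\<lambda>n. c n * E t ^ n) sums g t"
  shows "(\<lambda>n. (cmod (c n))\<^sup>2) sums (integral {0..2*pi} (\<lambda>t. (cmod (g t))\<^sup>2) / (2*pi))"
    and "integral {0..2*pi} (\<lambda>t. Re ((g t)\<^sup>2)) = 2*pi * Re ((c 0)\<^sup>2)"
    and "(\<lambda>t. (cmod (g t))\<^sup>2) integrable_on {0..2*pi}"
    and "(\<lambda>t. Re ((g t)\<^sup>2)) integrable_on {0..2*pi}"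
proof -
  define B where "B = (\<Sum>n. norm (c n))"
  define S where "S = (\<lambda>N t. \<Sum>n<N. c n * E t ^ n)"
  have Sb: "norm (S N t) \<le> B" for N t
  proof -
    have "norm (S N t) \<le> (\<Sum>n<N. norm (c n * E t ^ n))"
      unfolding S_def by (rule norm_sum)
    also have "\<dots> = (\<Sum>n<N. norm (c n))" by (simp add: norm_mult norm_power)
    also have "\<dots> \<le> B" unfolding B_def by (rule sum_le_suminf[OF sn]) auto
    finally show ?thesis .
  qed
  have Sb2: "(cmod (S N t))\<^sup>2 \<le> B\<^sup>2" for N t
    using Sb[of N t] by (intro power_mono) auto
  have lim: "(\<lambda>N. S N t) \<longlonglongrightarrow> g t" if "t \<in> {0..2*pi}" for t
    using sg[OF that] unfolding sums_def S_def .
  have int1: "((\<lambda>t. (cmod (S N t))\<^sup>2) has_integral (2*pi * (\<Sum>n<N. (cmod (c n))\<^sup>2))) {0..2*pi}" for N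
    unfolding S_def by (rule finite_parseval)
  have dc1: "(\<lambda>t. (cmod (g t))\<^sup>2) integrable_on {0..2*pi} \<and>
      (\<lambda>N. integral {0..2*pi} (\<lambda>t. (cmod (S N t))\<^sup>2)) \<longlonglongrightarrow> integral {0..2*pi} (\<lambda>t. (cmod (g t))\<^sup>2)"
  proof -
    have a: "(\<lambda>t. (cmod (S N t))\<^sup>2) integrable_on {0..2*pi}" for N using int1 by blast
    have b: "(\<lambda>_. B\<^sup>2) integrable_on {0..2*pi}" by (rule integrable_const_ivl)
    have c: "norm ((cmod (S N t))\<^sup>2) \<le> B\<^sup>2" if "t \<in> {0..2*pi}" for N t using Sb2 by simp
    have d: "(\<lambda>N. (cmod (S N t))\<^sup>2) \<longlonglongrightarrow> (cmod (g t))\<^sup>2" if "t \<in> {0..2*pi}" for t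
      using lim[OF that] by (intro tendsto_intros)
    show ?thesis using dominated_convergence[OF a b c d] by blast
  qed
  then show "(\<lambda>t. (cmod (g t))\<^sup>2) integrable_on {0..2*pi}" by blast
  have "(\<lambda>N. 2*pi * (\<Sum>n<N. (cmod (c n))\<^sup>2)) \<longlonglongrightarrow> integral {0..2*pi} (\<lambda>t. (cmod (g t))\<^sup>2)"
  proof -
    have "integral {0..2*pi} (\<lambda>t. (cmod (S N t))\<^sup>2) = 2*pi * (\<Sum>n<N. (cmod (c n))\<^sup>2)" for N
      using int1 by (rule integral_unique)
    then show ?thesis using dc1 by simp
  qed
  then have "(\<lambda>N. (2*pi * (\<Sum>n<N. (cmod (c n))\<^sup>2)) / (2*pi)) \<longlonglongrightarrow> integral {0..2*pi} (\<lambda>t. (cmod (g t))\<^sup>2) / (2*pi)"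
    by (rule tendsto_divide[OF _ tendsto_const]) (use pi_gt_zero in linarith)+
  then show "(\<lambda>n. (cmod (c n))\<^sup>2) sums (integral {0..2*pi} (\<lambda>t. (cmod (g t))\<^sup>2) / (2*pi))"
    unfolding sums_def by simp
  have int2: "((\<lambda>t. Re ((S N t)\<^sup>2)) has_integral (2*pi * Re ((c 0)\<^sup>2))) {0..2*pi}" if "N > 0" for N
    unfolding S_def by (rule finite_parseval2[OF that])
  have Sb3: "norm (Re ((S N t)\<^sup>2)) \<le> B\<^sup>2" for N t
  proof -
    have "norm (Re ((S N t)\<^sup>2)) \<le> cmod ((S N t)\<^sup>2)" by (simp add: abs_Re_le_cmod)
    also have "\<dots> = (cmod (S N t))\<^sup>2" by (simp add: norm_power)
    finally show ?thesis using Sb2[of N t] by linarith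
  qed
  have dc2: "(\<lambda>t. Re ((g t)\<^sup>2)) integrable_on {0..2*pi} \<and>
      (\<lambda>N. integral {0..2*pi} (\<lambda>t. Re ((S (Suc N) t)\<^sup>2))) \<longlonglongrightarrow> integral {0..2*pi} (\<lambda>t. Re ((g t)\<^sup>2))"
  proof -
    have a: "(\<lambda>t. Re ((S (Suc N) t)\<^sup>2)) integrable_on {0..2*pi}" for N using int2[of "Suc N"] by blast
    have b: "(\<lambda>_. B\<^sup>2) integrable_on {0..2*pi}" by (rule integrable_const_ivl)
    have c: "norm (Re ((S (Suc N) t)\<^sup>2)) \<le> B\<^sup>2" if "t \<in> {0..2*pi}" for N t using Sb3 by simp
    have d: "(\<lambda>N. Re ((S (Suc N) t)\<^sup>2)) \<longlonglongrightarrow> Re ((g t)\<^sup>2)" if "t \<in> {0..2*pi}" for t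
      using LIMSEQ_Suc[OF lim[OF that]] by (intro tendsto_intros)
    show ?thesis using dominated_convergence[OF a b c d] by blast
  qed
  then show "(\<lambda>t. Re ((g t)\<^sup>2)) integrable_on {0..2*pi}" by blast
  have "(\<lambda>N. 2*pi * Re ((c 0)\<^sup>2)) \<longlonglongrightarrow> integral {0..2*pi} (\<lambda>t. Re ((g t)\<^sup>2))"
  proof -
    have "integral {0..2*pi} (\<lambda>t. Re ((S (Suc N) t)\<^sup>2)) = 2*pi * Re ((c 0)\<^sup>2)" for N
      using int2[of "Suc N"] by (simp add: integral_unique)
    then show ?thesis using dc2 by simp
  qed
  then show "integral {0..2*pi} (\<lambda>t. Re ((g t)\<^sup>2)) = 2*pi * Re ((c 0)\<^sup>2)"
    using LIMSEQ_unique tendsto_const by blast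
qed

lemma log_facts:
  assumes "p \<in> caratheodory_class"
  shows "(\<lambda>z. Ln (p z)) holomorphic_on ball 0 1"
    and "\<And>z. z \<in> ball 0 1 \<Longrightarrow> deriv (\<lambda>z. Ln (p z)) z = deriv p z / p z"
    and "\<And>z. z \<in> ball 0 1 \<Longrightarrow> \<bar>Im (Ln (p z))\<bar> \<le> pi/2"
proof -
  have hp: "p holomorphic_on ball 0 1" and rp: "\<And>z. z \<in> ball 0 1 \<Longrightarrow> Re (p z) > 0"
    using assms unfolding caratheodory_class_def by auto
  have np: "p z \<notin> \<real>\<^sub>\<le>\<^sub>0" if "z \<in> ball 0 1" for z
    using rp[OF that] by (auto simp: complex_nonpos_Reals_iff)
  have d: "((\<lambda>z. Ln (p z)) has_field_derivative deriv p z / p z) (at z)" if "z \<in> ball 0 1" for z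
  proof -
    have "((\<lambda>z. Ln (p z)) has_field_derivative inverse (p z) * deriv p z) (at z)"
      by (rule DERIV_chain2[OF has_field_derivative_Ln[OF np[OF that]] holomorphic_derivI[OF hp open_ball that]])
    then show ?thesis by (simp add: field_simps)
  qed
  show "(\<lambda>z. Ln (p z)) holomorphic_on ball 0 1"
    unfolding holomorphic_on_def using d
    by (metis field_differentiable_at_within field_differentiable_def)
  show "deriv (\<lambda>z. Ln (p z)) z = deriv p z / p z" if "z \<in> ball 0 1" for z
    using d[OF that] by (rule DERIV_imp_deriv)
  show "\<bar>Im (Ln (p z))\<bar> \<le> pi/2" if "z \<in> ball 0 1" for z
  proof -
    have "p z \<noteq> 0" using rp[OF that] by auto
    then show ?thesis using Re_Ln_pos_lt[of "p z"] rp[OF that] by linarith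
  qed
qed

lemma series_facts:
  assumes hf: "f holomorphic_on ball 0 1" and w: "w \<in> ball 0 1"
  shows "(\<lambda>n. ((deriv ^^ n) f 0 / fact n) * w ^ n) sums f w"
    and "(\<lambda>n. (of_nat n * ((deriv ^^ n) f 0 / fact n)) * w ^ n) sums (w * deriv f w)"
proof -
  show "(\<lambda>n. ((deriv ^^ n) f 0 / fact n) * w ^ n) sums f w"
    using holomorphic_power_series[OF hf w] by simp
  have hd: "deriv f holomorphic_on ball 0 1" by (rule holomorphic_deriv[OF hf open_ball])
  have "(\<lambda>n. (deriv ^^ n) (deriv f) 0 / fact n * w ^ n) sums deriv f w"
    using holomorphic_power_series[OF hd w] by simp
  then have "(\<lambda>n. w * ((deriv ^^ Suc n) f 0 / fact n * w ^ n)) sums (w * deriv f w)"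
    by (intro sums_mult) (simp add: funpow_Suc_right del: funpow.simps)
  moreover have "w * ((deriv ^^ Suc n) f 0 / fact n * w ^ n) =
      (of_nat (Suc n) * ((deriv ^^ Suc n) f 0 / fact (Suc n))) * w ^ Suc n" for n
    by (simp add: field_simps del: funpow.simps of_nat_Suc)
  ultimately have "(\<lambda>n. (of_nat (Suc n) * ((deriv ^^ Suc n) f 0 / fact (Suc n))) * w ^ Suc n) sums (w * deriv f w)"
    by simp
  then show "(\<lambda>n. (of_nat n * ((deriv ^^ n) f 0 / fact n)) * w ^ n) sums (w * deriv f w)"
    by (subst (asm) sums_Suc_iff) simp
qed

lemma abs_summ:
  fixes c :: "nat \<Rightarrow> complex"
  assumes "\<And>w. w \<in> ball 0 1 \<Longrightarrow> summable (\<lambda>n. c n * w ^ n)" "0 \<le> r" "r < 1"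
  shows "summable (\<lambda>n. norm (c n * of_real r ^ n))"
proof -
  have "of_real ((r+1)/2) \<in> ball (0::complex) 1" using assms by auto
  from assms(1)[OF this] show ?thesis
    by (rule powser_insidea) (use assms in auto)
qed

lemma coeff_bound_rho:
  fixes a :: "nat \<Rightarrow> complex" and f :: "complex \<Rightarrow> complex"
  assumes sf: "\<And>w. w \<in> ball 0 1 \<Longrightarrow> (\<lambda>n. a n * w^n) sums f w"
    and im: "\<And>w. w \<in> ball 0 1 \<Longrightarrow> \<bar>Im (f w)\<bar> \<le> pi/2"
    and rho: "0 < \<rho>" "\<rho> < 1"
  shows "(\<Sum>n<N. (cmod (a n))\<^sup>2 * \<rho>^(2*n)) \<le> pi\<^sup>2/2 + (cmod (a 0))\<^sup>2"
proof -
  define c where "c n = a n * of_real \<rho> ^ n" for n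
  define g where "g t = f (of_real \<rho> * E t)" for t
  have sc: "summable (\<lambda>n. norm (c n))"
  proof -
    have "summable (\<lambda>n. a n * w^n)" if "w \<in> ball 0 1" for w using sf[OF that] by (rule sums_summable)
    from abs_summ[OF this] rho show ?thesis unfolding c_def by simp
  qed
  have inb: "of_real \<rho> * E t \<in> ball 0 1" for t
    using rho by (simp add: norm_mult)
  have sg: "(\<lambda>n. c n * E t ^ n) sums g t" for t
    using sf[OF inb[of t]] unfolding c_def g_def by (simp add: power_mult_distrib mult_ac)
  note P = parseval[OF sc sg]
  define I1 where "I1 = integral {0..2*pi} (\<lambda>t. (cmod (g t))\<^sup>2)"
  define I2 where "I2 = integral {0..2*pi} (\<lambda>t. Re ((g t)\<^sup>2))"
  have h1: "((\<lambda>t. (cmod (g t))\<^sup>2) has_integral I1) {0..2*pi}"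
    unfolding I1_def using P(3) by (rule integrable_integral)
  have h2: "((\<lambda>t. Re ((g t)\<^sup>2)) has_integral I2) {0..2*pi}"
    unfolding I2_def using P(4) by (rule integrable_integral)
  have h3: "((\<lambda>t. ((cmod (g t))\<^sup>2 - Re ((g t)\<^sup>2)) / 2) has_integral (I1 - I2) / 2) {0..2*pi}"
    by (intro has_integral_divide has_integral_diff h1 h2)
  have h4: "((\<lambda>t. pi\<^sup>2/4) has_integral (2*pi - 0) *\<^sub>R (pi\<^sup>2/4)) {0..2*pi}"
    using has_integral_const_real[of "pi\<^sup>2/4" 0 "2*pi"] pi_gt_zero by simp
  have le: "((cmod (g t))\<^sup>2 - Re ((g t)\<^sup>2)) / 2 \<le> pi\<^sup>2/4" for t
  proof -
    have "((cmod (g t))\<^sup>2 - Re ((g t)\<^sup>2)) / 2 = (Im (g t))\<^sup>2"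
      by (simp add: cmod_power2 Re_power2)
    also have "\<dots> = \<bar>Im (g t)\<bar>\<^sup>2" by simp
    also have "\<dots> \<le> (pi/2)\<^sup>2"
      unfolding g_def by (intro power_mono im inb) auto
    finally show ?thesis by (simp add: power_divide)
  qed
  have "(I1 - I2) / 2 \<le> (2*pi - 0) *\<^sub>R (pi\<^sup>2/4)"
    by (rule has_integral_le[OF h3 h4]) (use le in auto)
  then have A: "I1 - I2 \<le> pi^3" by (simp add: power2_eq_square power3_eq_cube)
  have I2eq: "I2 = 2*pi * Re ((c 0)\<^sup>2)" unfolding I2_def by (rule P(2))
  have "Re ((c 0)\<^sup>2) \<le> cmod ((c 0)\<^sup>2)" by (rule complex_Re_le_cmod)
  also have "\<dots> = (cmod (a 0))\<^sup>2" by (simp add: c_def norm_power)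
  finally have B: "Re ((c 0)\<^sup>2) \<le> (cmod (a 0))\<^sup>2" .
  have sums: "(\<lambda>n. (cmod (c n))\<^sup>2) sums (I1 / (2*pi))" unfolding I1_def by (rule P(1))
  have "(\<Sum>n<N. (cmod (c n))\<^sup>2) \<le> I1 / (2*pi)"
  proof -
    have "(\<Sum>n<N. (cmod (c n))\<^sup>2) \<le> (\<Sum>n. (cmod (c n))\<^sup>2)"
      by (rule sum_le_suminf[OF sums_summable[OF sums]]) auto
    also have "\<dots> = I1 / (2*pi)" using sums by (rule sums_unique[symmetric])
    finally show ?thesis .
  qed
  also have "\<dots> \<le> pi\<^sup>2/2 + (cmod (a 0))\<^sup>2"
  proof -
    have "2*pi*Re ((c 0)\<^sup>2) \<le> 2*pi*(cmod (a 0))\<^sup>2"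
      by (rule mult_left_mono[OF B]) (use pi_gt_zero in linarith)
    then have "I1 \<le> pi^3 + 2*pi * (cmod (a 0))\<^sup>2" using A I2eq by linarith
    also have "\<dots> = (pi\<^sup>2/2 + (cmod (a 0))\<^sup>2) * (2*pi)"
      by (simp add: algebra_simps power2_eq_square power3_eq_cube)
    finally show ?thesis using pi_gt_zero by (subst pos_divide_le_eq) auto
  qed
  also have "(\<Sum>n<N. (cmod (c n))\<^sup>2) = (\<Sum>n<N. (cmod (a n))\<^sup>2 * \<rho>^(2*n))"
  proof (intro sum.cong refl)
    fix n
    have "(cmod (c n))\<^sup>2 = (cmod (a n) * \<rho>^n)\<^sup>2"
      using rho by (simp add: c_def norm_mult norm_power)
    also have "\<dots> = (cmod (a n))\<^sup>2 * \<rho>^(2*n)" by (simp add: power_mult_distrib power_even_eq)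
    finally show "(cmod (c n))\<^sup>2 = (cmod (a n))\<^sup>2 * \<rho>^(2*n)" .
  qed
  finally show ?thesis .
qed

lemma coeff_bound:
  fixes a :: "nat \<Rightarrow> complex" and f :: "complex \<Rightarrow> complex"
  assumes sf: "\<And>w. w \<in> ball 0 1 \<Longrightarrow> (\<lambda>n. a n * w^n) sums f w"
    and im: "\<And>w. w \<in> ball 0 1 \<Longrightarrow> \<bar>Im (f w)\<bar> \<le> pi/2"
  shows "summable (\<lambda>n. if n = 0 then 0 else (cmod (a n))\<^sup>2)"
    and "(\<Sum>n. if n = 0 then 0 else (cmod (a n))\<^sup>2) \<le> pi\<^sup>2/2"
proof -
  define \<alpha> where "\<alpha> n = (if n = 0 then 0 else (cmod (a n))\<^sup>2)" for n
  have s2: "(\<Sum>n<N. (cmod (a n))\<^sup>2) \<le> pi\<^sup>2/2 + (cmod (a 0))\<^sup>2" for N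
  proof -
    have lim: "((\<lambda>\<rho>. \<Sum>n<N. (cmod (a n))\<^sup>2 * \<rho>^(2*n)) \<longlongrightarrow> (\<Sum>n<N. (cmod (a n))\<^sup>2 * 1^(2*n))) (at_left 1)"
      by (intro tendsto_intros)
    have ev: "eventually (\<lambda>\<rho>. (\<Sum>n<N. (cmod (a n))\<^sup>2 * \<rho>^(2*n)) \<le> pi\<^sup>2/2 + (cmod (a 0))\<^sup>2) (at_left (1::real))"
    proof -
      have "eventually (\<lambda>\<rho>. \<rho> \<in> {0<..<1}) (at_left (1::real))"
        by (rule eventually_at_left_real) simp
      then show ?thesis
        by (rule eventually_mono) (rule coeff_bound_rho[OF sf im]; simp)
    qed
    have "(\<Sum>n<N. (cmod (a n))\<^sup>2 * 1^(2*n)) \<le> pi\<^sup>2/2 + (cmod (a 0))\<^sup>2"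
      by (rule tendsto_le[OF trivial_limit_at_left_real tendsto_const lim ev])
    then show ?thesis by simp
  qed
  have s3: "(\<Sum>n<N. \<alpha> n) \<le> pi\<^sup>2/2" for N
  proof (cases N)
    case 0 then show ?thesis by simp
  next
    case (Suc M)
    have "(\<Sum>n<Suc M. \<alpha> n) = (\<Sum>n<M. (cmod (a (Suc n)))\<^sup>2)"
      by (subst sum.lessThan_Suc_shift) (simp add: \<alpha>_def)
    also have "\<dots> = (\<Sum>n<Suc M. (cmod (a n))\<^sup>2) - (cmod (a 0))\<^sup>2"
      by (subst sum.lessThan_Suc_shift) simp
    finally show ?thesis using s2[of "Suc M"] Suc by simp
  qed
  have nn: "\<And>n. 0 \<le> \<alpha> n" by (simp add: \<alpha>_def)
  have sa: "summable \<alpha>"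
  proof (rule bounded_imp_summable[OF nn, where B = "pi\<^sup>2/2"])
    fix n show "(\<Sum>k\<le>n. \<alpha> k) \<le> pi\<^sup>2/2" using s3[of "Suc n"] by (simp only: lessThan_Suc_atMost)
  qed
  then show "summable (\<lambda>n. if n = 0 then 0 else (cmod (a n))\<^sup>2)" by (simp add: \<alpha>_def[abs_def])
  have "suminf \<alpha> \<le> pi\<^sup>2/2" by (rule suminf_le_const[OF sa s3])
  then show "(\<Sum>n. if n = 0 then 0 else (cmod (a n))\<^sup>2) \<le> pi\<^sup>2/2" by (simp add: \<alpha>_def[abs_def])
qed

lemma nr_bound:
  fixes r :: real
  assumes "0 < r" "r < 1"
  shows "real n * r^n * (1 - r) \<le> exp (-1)"
proof -
  define y where "y = real n * (1 - r)"
  have y0: "0 \<le> y" using assms by (simp add: y_def)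
  have "r \<le> exp (r - 1)" using exp_ge_add_one_self[of "r - 1"] by simp
  then have "r^n \<le> exp (r - 1)^n" by (rule power_mono) (use assms in simp)
  also have "\<dots> = exp (- y)" by (simp add: y_def exp_of_nat_mult[symmetric] algebra_simps)
  finally have rn: "r^n \<le> exp (- y)" .
  have "real n * r^n * (1 - r) = y * r^n" by (simp add: y_def)
  also have "\<dots> \<le> y * exp (- y)" by (rule mult_left_mono[OF rn y0])
  also have "\<dots> \<le> exp (y - 1) * exp (- y)"
    using exp_ge_add_one_self[of "y - 1"] by (intro mult_right_mono) auto
  also have "\<dots> = exp (-1)" by (simp add: exp_add[symmetric])
  finally show ?thesis .
qed

theorem theorem1p1:
  fixes p :: "complex \<Rightarrow> complex"
  assumes "p \<in> caratheodory_class"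
  shows "(\<forall>r::real. 0 < r \<and> r < 1 \<longrightarrow> I_p p r \<le> pi ^ 3 * exp (-2) / (1 - r)\<^sup>2)
    \<and> (\<lambda>r. I_p p r) \<in> o[at_left 1](\<lambda>r. 1 / (1 - r)\<^sup>2)"
proof -
  define f where "f = (\<lambda>z. Ln (p z))"
  define a where "a n = (deriv ^^ n) f 0 / fact n" for n
  define \<alpha> where "\<alpha> n = (if n = 0 then 0 else (cmod (a n))\<^sup>2)" for n
  have hf: "f holomorphic_on ball 0 1" unfolding f_def by (rule log_facts(1)[OF assms])
  have dv: "deriv f z = deriv p z / p z" if "z \<in> ball 0 1" for z
    unfolding f_def by (rule log_facts(2)[OF assms that])
  have imb: "\<bar>Im (f z)\<bar> \<le> pi/2" if "z \<in> ball 0 1" for z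
    unfolding f_def by (rule log_facts(3)[OF assms that])
  have sf: "(\<lambda>n. a n * w^n) sums f w" if "w \<in> ball 0 1" for w
    unfolding a_def by (rule series_facts(1)[OF hf that])
  have sd: "(\<lambda>n. (of_nat n * a n) * w^n) sums (w * deriv f w)" if "w \<in> ball 0 1" for w
    unfolding a_def by (rule series_facts(2)[OF hf that])
  have sa: "summable \<alpha>" and sa2: "suminf \<alpha> \<le> pi\<^sup>2/2"
    using coeff_bound[OF sf imb] by (simp_all add: \<alpha>_def[abs_def])
  have a0: "0 \<le> \<alpha> n" for n by (simp add: \<alpha>_def)
  have key: "(\<lambda>n. \<alpha> n * (real n * r^n)\<^sup>2) sums (I_p p r / (2*pi))" if r: "0 < r" "r < 1" for r
  proof -
    define c where "c n = (of_nat n * a n) * of_real r ^ n" for n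
    define g where "g t = (of_real r * E t) * deriv f (of_real r * E t)" for t
    have sc: "summable (\<lambda>n. norm (c n))"
    proof -
      have "summable (\<lambda>n. (of_nat n * a n) * w^n)" if "w \<in> ball 0 1" for w using sd[OF that] by (rule sums_summable)
      from abs_summ[OF this] r show ?thesis unfolding c_def by simp
    qed
    have inb: "of_real r * E t \<in> ball 0 1" for t
      using r by (simp add: norm_mult)
    have sg: "(\<lambda>n. c n * E t ^ n) sums g t" for t
      using sd[OF inb[of t]] unfolding c_def g_def by (simp add: power_mult_distrib mult_ac)
    have "(\<lambda>n. (cmod (c n))\<^sup>2) sums (integral {0..2*pi} (\<lambda>t. (cmod (g t))\<^sup>2) / (2*pi))"
      by (rule parseval(1)[OF sc sg])
    moreover have "integral {0..2*pi} (\<lambda>t. (cmod (g t))\<^sup>2) = I_p p r"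
    proof -
      have "(\<lambda>t. (cmod (g t))\<^sup>2) = (\<lambda>\<theta>. (cmod (let z = of_real r * exp (\<i> * of_real \<theta>) in z * deriv p z / p z))\<^sup>2)"
      proof
        fix t
        show "(cmod (g t))\<^sup>2 = (cmod (let z = of_real r * exp (\<i> * of_real t) in z * deriv p z / p z))\<^sup>2"
          using dv[OF inb[of t]] unfolding g_def Let_def E_def by simp
      qed
      then show ?thesis unfolding I_p_def by simp
    qed
    moreover have "(cmod (c n))\<^sup>2 = \<alpha> n * (real n * r^n)\<^sup>2" for n
    proof (cases "n = 0")
      case True then show ?thesis by (simp add: c_def \<alpha>_def)
    next
      case False
      have "(cmod (c n))\<^sup>2 = (real n * cmod (a n) * r^n)\<^sup>2"
        using r by (simp add: c_def norm_mult norm_power)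
      then show ?thesis using False by (simp add: \<alpha>_def power_mult_distrib)
    qed
    ultimately show ?thesis by simp
  qed
  have Ieq: "I_p p r = 2*pi * (\<Sum>n. \<alpha> n * (real n * r^n)\<^sup>2)" if "0 < r" "r < 1" for r
  proof -
    have "I_p p r / (2*pi) = (\<Sum>n. \<alpha> n * (real n * r^n)\<^sup>2)" using sums_unique[OF key[OF that]] .
    then show ?thesis using pi_gt_zero by (subst (asm) divide_eq_eq) (auto simp: mult_ac)
  qed
  have part1: "I_p p r \<le> pi ^ 3 * exp (-2) / (1 - r)\<^sup>2" if r: "0 < r" "r < 1" for r
  proof -
    define K where "K = (exp (-1) / (1 - r))\<^sup>2"
    have tb: "\<alpha> n * (real n * r^n)\<^sup>2 \<le> \<alpha> n * K" for n
    proof (rule mult_left_mono[OF _ a0])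
      have "real n * r^n \<le> exp (-1) / (1 - r)"
        using nr_bound[OF r, of n] r by (simp add: pos_le_divide_eq)
      then show "(real n * r^n)\<^sup>2 \<le> K" unfolding K_def
        by (intro power_mono) (use r in auto)
    qed
    have "(\<Sum>n. \<alpha> n * (real n * r^n)\<^sup>2) \<le> (\<Sum>n. \<alpha> n * K)"
      by (rule suminf_le[OF tb sums_summable[OF key[OF r]] summable_mult2[OF sa]])
    also have "\<dots> = suminf \<alpha> * K" by (rule suminf_mult2[OF sa, symmetric])
    also have "\<dots> \<le> pi\<^sup>2/2 * K" by (rule mult_right_mono[OF sa2]) (simp add: K_def)
    finally have "I_p p r \<le> 2*pi * (pi\<^sup>2/2 * K)"
      using Ieq[OF r] pi_gt_zero by (simp add: mult_left_mono)
    also have "\<dots> = pi ^ 3 * exp (-2) / (1 - r)\<^sup>2"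
      by (simp add: K_def power_divide power2_eq_square power3_eq_cube exp_add[symmetric])
    finally show ?thesis .
  qed
  have part2: "(\<lambda>r. I_p p r) \<in> o[at_left 1](\<lambda>r. 1 / (1 - r)\<^sup>2)"
  proof (rule landau_o.smallI)
    fix \<epsilon> :: real assume \<epsilon>: "0 < \<epsilon>"
    define \<delta> where "\<delta> = \<epsilon> / (4*pi)"
    have \<delta>: "0 < \<delta>" using \<epsilon> pi_gt_zero by (simp add: \<delta>_def)
    have "(\<lambda>N. \<Sum>n<N. \<alpha> n) \<longlonglongrightarrow> suminf \<alpha>" using sa by (rule summable_LIMSEQ)
    then have "eventually (\<lambda>N. suminf \<alpha> - \<delta> < (\<Sum>n<N. \<alpha> n)) sequentially"
      by (rule order_tendstoD) (use \<delta> in simp)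
    then obtain M where M: "suminf \<alpha> - \<delta> < (\<Sum>n<M. \<alpha> n)"
      by (meson eventually_sequentially order_refl)
    define K where "K = (\<Sum>n<M. \<alpha> n)"
    have "((\<lambda>r. (real M)\<^sup>2 * (1 - r)\<^sup>2 * K) \<longlongrightarrow> (real M)\<^sup>2 * (1 - 1)\<^sup>2 * K) (at_left (1::real))"
      by (intro tendsto_intros)
    then have ev1: "eventually (\<lambda>r. (real M)\<^sup>2 * (1 - r)\<^sup>2 * K < \<delta>) (at_left (1::real))"
      by (rule order_tendstoD) (use \<delta> in simp)
    have ev2: "eventually (\<lambda>r. r \<in> {0<..<1}) (at_left (1::real))"
      by (rule eventually_at_left_real) simp
    show "eventually (\<lambda>r. norm (I_p p r) \<le> \<epsilon> * norm (1 / (1 - r)\<^sup>2)) (at_left 1)"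
      using ev1 ev2
    proof eventually_elim
      case (elim r)
      then have r: "0 < r" "r < 1" by auto
      define X where "X = (real M)\<^sup>2 * (1 - r)\<^sup>2"
      have tb: "\<alpha> n * (real n * r^n * (1 - r))\<^sup>2 \<le> \<alpha> n * (if n < M then X else 1)" for n
      proof (rule mult_left_mono[OF _ a0])
        have nn: "0 \<le> real n * r^n * (1 - r)" using r by simp
        show "(real n * r^n * (1 - r))\<^sup>2 \<le> (if n < M then X else 1)"
        proof (cases "n < M")
          case True
          have "real n * r^n * (1 - r) \<le> real M * 1 * (1 - r)"
            using True r by (intro mult_right_mono mult_mono power_le_one) auto
          then have "(real n * r^n * (1 - r))\<^sup>2 \<le> (real M * 1 * (1 - r))\<^sup>2"
            by (rule power_mono[OF _ nn])
          then show ?thesis using True by (simp add: X_def power_mult_distrib)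
        next
          case False
          have "real n * r^n * (1 - r) \<le> 1"
            using nr_bound[OF r, of n] by (smt (verit) exp_le_one_iff)
          then have "(real n * r^n * (1 - r))\<^sup>2 \<le> 1\<^sup>2" by (rule power_mono[OF _ nn])
          then show ?thesis using False by simp
        qed
      qed
      have sX: "(\<lambda>n. \<alpha> n * (if n < M then X else 1)) sums (suminf \<alpha> + (\<Sum>n<M. \<alpha> n * (X - 1)))"
      proof -
        have e: "(\<lambda>n. \<alpha> n * (if n < M then X else 1)) = (\<lambda>n. \<alpha> n + (if n < M then \<alpha> n * (X - 1) else 0))"
          by (auto simp: algebra_simps)
        have "(\<lambda>n. if n < M then \<alpha> n * (X - 1) else 0) sums (\<Sum>n\<in>{..<M}. if n < M then \<alpha> n * (X - 1) else 0)"
          by (rule sums_finite) auto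
        then have "(\<lambda>n. if n < M then \<alpha> n * (X - 1) else 0) sums (\<Sum>n<M. \<alpha> n * (X - 1))" by simp
        from sums_add[OF summable_sums[OF sa] this] show ?thesis unfolding e .
      qed
      have s1: "(\<lambda>n. \<alpha> n * (real n * r^n * (1 - r))\<^sup>2) sums ((1 - r)\<^sup>2 * (I_p p r / (2*pi)))"
      proof -
        have "(\<lambda>n. \<alpha> n * (real n * r^n)\<^sup>2 * (1 - r)\<^sup>2) sums (I_p p r / (2*pi) * (1 - r)\<^sup>2)"
          by (rule sums_mult2[OF key[OF r]])
        then show ?thesis by (simp add: power_mult_distrib mult_ac)
      qed
      have "(1 - r)\<^sup>2 * (I_p p r / (2*pi)) \<le> suminf \<alpha> + (\<Sum>n<M. \<alpha> n * (X - 1))"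
        by (rule sums_le[OF tb s1 sX])
      also have "(\<Sum>n<M. \<alpha> n * (X - 1)) = K * (X - 1)" by (simp add: K_def sum_distrib_right)
      also have "suminf \<alpha> + K * (X - 1) = (suminf \<alpha> - K) + X * K" by (simp add: algebra_simps)
      also have "\<dots> \<le> 2 * \<delta>" using M elim X_def K_def by (simp add: mult_ac)
      finally have A: "(1 - r)\<^sup>2 * (I_p p r / (2*pi)) \<le> 2 * \<delta>" .
      have Ipos: "0 \<le> I_p p r"
        using Ieq[OF r] suminf_nonneg[OF sums_summable[OF key[OF r]]] a0 pi_gt_zero by simp
      have r1: "0 < (1 - r)\<^sup>2" using r by simp
      have "I_p p r * (1 - r)\<^sup>2 \<le> \<epsilon>"
        using A pi_gt_zero by (simp add: \<delta>_def field_simps)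
      then have "I_p p r \<le> \<epsilon> / (1 - r)\<^sup>2" using r1 by (simp add: pos_le_divide_eq)
      then show ?case using Ipos r1 by simp
    qed
  qed
  show ?thesis using part1 part2 by blast
qed

end
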